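(* Let $R$ be a finite local ring with maximal ideal $M$, and let $\chi,\eta$ be multiplicative characters of $R$. (i) Assume $\eta$ is primitive. If $\chi$ is neither trivial nor primitive, then $J(\chi,\eta)=0$; if $\chi$ is trivial and $R$ is not a field, then $J(\chi,\eta)=0$ as well. (ii) Assume $\chi$ and $\eta$ are primitive. If $R$ is not a field and $\chi\eta$ is neither trivial nor primitive, then $J(\chi,\eta)=0$. (iii) Assume $R$ admits a primitive additive character $\psi$ (with respect to which Gauss sums are taken). If $\chi\eta$ is primitive, then $G(\chi)G(\eta)=J(\chi,\eta)\,G(\chi\eta)$.
   Context: All rings are finite and commutative with identity; $R^\times$ is the unit group. A multiplicative character is a homomorphism $R^\times\to\mathbb{C}^*$; its conductor is $R$ if it is trivial, and otherwise the largest ideal $I\subseteq M$ such that it is identically $1$ on $1+I$; it is primitive if its conductor is $(0)$. An additive character $(R,+)\to\mathbb{C}^*$ is primitive if the only ideal on which it is identically $1$ is $(0)$. Gauss sum $G(\chi)=\sum_{u\in R^\times}\psi(u)\chi(u)$; Jacobi sum $J(\chi,\eta)=\sum_{u,v\in R^\times,\,u+v=1}\chi(u)\eta(v)$. *)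

theory Defs
  imports Complex_Main
begin

text \<open>Rings are the elements of a type of class comm_ring_1 that is finite.\<close>

definition ring_units :: "'a::comm_ring_1 set" where
  "ring_units = {u. u dvd 1}"

definition is_ideal :: "'a::comm_ring_1 set \<Rightarrow> bool" where
  "is_ideal I \<longleftrightarrow> 0 \<in> I \<and> (\<forall>x\<in>I. \<forall>y\<in>I. x + y \<in> I) \<and> (\<forall>r. \<forall>x\<in>I. r * x \<in> I)"

definition maximal_ideal :: "'a::comm_ring_1 set \<Rightarrow> bool" where
  "maximal_ideal M \<longleftrightarrow> is_ideal M \<and> M \<noteq> UNIV \<and>
     (\<forall>J. is_ideal J \<and> M \<subseteq> J \<longrightarrow> J = M \<or> J = UNIV)"

definition local_ring :: "'a::comm_ring_1 itself \<Rightarrow> bool" where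
  "local_ring _ \<longleftrightarrow> (\<exists>!M::'a set. maximal_ideal M)"

definition ring_is_field :: "'a::comm_ring_1 itself \<Rightarrow> bool" where
  "ring_is_field _ \<longleftrightarrow> (0::'a) \<noteq> 1 \<and> (\<forall>x::'a. x \<noteq> 0 \<longrightarrow> x dvd 1)"

text \<open>Multiplicative character: homomorphism from the unit group to C*
  (only its values on units matter).\<close>
definition mult_char :: "('a::comm_ring_1 \<Rightarrow> complex) \<Rightarrow> bool" where
  "mult_char \<chi> \<longleftrightarrow> (\<forall>u\<in>ring_units. \<forall>v\<in>ring_units. \<chi> (u * v) = \<chi> u * \<chi> v)
                   \<and> (\<forall>u\<in>ring_units. \<chi> u \<noteq> 0)"

definition trivial_char :: "('a::comm_ring_1 \<Rightarrow> complex) \<Rightarrow> bool" where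
  "trivial_char \<chi> \<longleftrightarrow> (\<forall>u\<in>ring_units. \<chi> u = 1)"

definition conductor :: "'a::comm_ring_1 set \<Rightarrow> ('a \<Rightarrow> complex) \<Rightarrow> 'a set" where
  "conductor M \<chi> = (if trivial_char \<chi> then UNIV
     else (GREATEST I. is_ideal I \<and> I \<subseteq> M \<and> (\<forall>x\<in>I. \<chi> (1 + x) = 1)))"

definition primitive_char :: "'a::comm_ring_1 set \<Rightarrow> ('a \<Rightarrow> complex) \<Rightarrow> bool" where
  "primitive_char M \<chi> \<longleftrightarrow> conductor M \<chi> = {0}"

definition add_char :: "('a::comm_ring_1 \<Rightarrow> complex) \<Rightarrow> bool" where
  "add_char \<psi> \<longleftrightarrow> (\<forall>x y. \<psi> (x + y) = \<psi> x * \<psi> y) \<and> (\<forall>x. \<psi> x \<noteq> 0)"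

definition primitive_add_char :: "('a::comm_ring_1 \<Rightarrow> complex) \<Rightarrow> bool" where
  "primitive_add_char \<psi> \<longleftrightarrow>
     (\<forall>I. is_ideal I \<and> (\<forall>x\<in>I. \<psi> x = 1) \<longrightarrow> I = {0})"

definition gauss_sum :: "('a::comm_ring_1 \<Rightarrow> complex) \<Rightarrow> ('a \<Rightarrow> complex) \<Rightarrow> complex" where
  "gauss_sum \<psi> \<chi> = (\<Sum>u\<in>ring_units. \<psi> u * \<chi> u)"

definition jacobi_sum :: "('a::comm_ring_1 \<Rightarrow> complex) \<Rightarrow> ('a \<Rightarrow> complex) \<Rightarrow> complex" where
  "jacobi_sum \<chi> \<eta> = (\<Sum>(u, v)\<in>{(u, v). u \<in> ring_units \<and> v \<in> ring_units \<and> u + v = 1}. \<chi> u * \<eta> v)"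

definition char_mult :: "('a \<Rightarrow> complex) \<Rightarrow> ('a \<Rightarrow> complex) \<Rightarrow> ('a \<Rightarrow> complex)" where
  "char_mult \<chi> \<eta> = (\<lambda>u. \<chi> u * \<eta> u)"

end

theory Submission
  imports Defs
begin


definition uinv :: "'a::comm_ring_1 \<Rightarrow> 'a" where
  "uinv u = (SOME w. u * w = 1)"

lemma ring_units_iff: "u \<in> ring_units \<longleftrightarrow> u dvd 1" by (simp add: ring_units_def)

lemma uinv: "u \<in> ring_units \<Longrightarrow> u * uinv u = 1"
proof -
  assume "u \<in> ring_units"
  then obtain k where "1 = u * k" unfolding ring_units_iff by (erule dvdE)
  then have "u * k = 1" by simp
  then have "\<exists>w. u * w = 1" by (rule exI)
  then show ?thesis unfolding uinv_def by (rule someI_ex)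
qed

lemma uinv_unit: "u \<in> ring_units \<Longrightarrow> uinv u \<in> ring_units"
  unfolding ring_units_iff
proof -
  assume "u dvd 1"
  then have "uinv u * u = 1" using uinv[of u] unfolding ring_units_iff by (simp add: mult.commute)
  then show "uinv u dvd 1" by (rule dvdI[OF sym])
qed

lemma units_mult: "u \<in> ring_units \<Longrightarrow> v \<in> ring_units \<Longrightarrow> u * v \<in> ring_units"
  unfolding ring_units_iff using mult_dvd_mono[of u 1 v 1] by simp

lemma units_one: "1 \<in> ring_units" unfolding ring_units_iff by simp

lemma units_uminus: "u \<in> ring_units \<Longrightarrow> - u \<in> ring_units"
  unfolding ring_units_iff by simp

lemma units_mult_iff: "u * v \<in> ring_units \<longleftrightarrow> u \<in> ring_units \<and> v \<in> ring_units"
proof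
  assume "u * v \<in> ring_units"
  then have "u * v dvd 1" unfolding ring_units_iff .
  then have "u dvd 1" "v dvd 1" by (rule dvd_mult_left, rule dvd_mult_right)
  then show "u \<in> ring_units \<and> v \<in> ring_units" unfolding ring_units_iff by simp
next
  assume "u \<in> ring_units \<and> v \<in> ring_units"
  then show "u * v \<in> ring_units" unfolding ring_units_iff using mult_dvd_mono[of u 1 v 1] by simp
qed

lemma ideal_0: "is_ideal I \<Longrightarrow> 0 \<in> I" unfolding is_ideal_def by auto
lemma ideal_add: "is_ideal I \<Longrightarrow> x \<in> I \<Longrightarrow> y \<in> I \<Longrightarrow> x + y \<in> I" unfolding is_ideal_def by auto
lemma ideal_mult: "is_ideal I \<Longrightarrow> x \<in> I \<Longrightarrow> r * x \<in> I" unfolding is_ideal_def by auto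
lemma ideal_mult2: "is_ideal I \<Longrightarrow> x \<in> I \<Longrightarrow> x * r \<in> I" unfolding is_ideal_def by (auto simp: mult.commute)
lemma ideal_uminus: "is_ideal I \<Longrightarrow> x \<in> I \<Longrightarrow> - x \<in> I"
  using ideal_mult[of I x "-1"] by simp
lemma ideal_diff: "is_ideal I \<Longrightarrow> x \<in> I \<Longrightarrow> y \<in> I \<Longrightarrow> x - y \<in> I"
  using ideal_add[of I x "-y"] ideal_uminus[of I y] by simp

lemma mult_char_mult: "mult_char \<chi> \<Longrightarrow> u \<in> ring_units \<Longrightarrow> v \<in> ring_units \<Longrightarrow> \<chi> (u*v) = \<chi> u * \<chi> v"
  unfolding mult_char_def by blast

lemma mult_char_nz: "mult_char \<chi> \<Longrightarrow> u \<in> ring_units \<Longrightarrow> \<chi> u \<noteq> 0"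
  unfolding mult_char_def by blast

lemma mult_char_one: "mult_char \<chi> \<Longrightarrow> \<chi> 1 = 1"
proof -
  assume m: "mult_char \<chi>"
  have "\<chi> (1 * 1) = \<chi> 1 * \<chi> 1" by (rule mult_char_mult[OF m units_one units_one])
  then have "\<chi> 1 = \<chi> 1 * \<chi> 1" by simp
  moreover have "\<chi> 1 \<noteq> 0" by (rule mult_char_nz[OF m units_one])
  ultimately show ?thesis by simp
qed

lemma mult_char_char_mult: "mult_char \<chi> \<Longrightarrow> mult_char \<eta> \<Longrightarrow> mult_char (char_mult \<chi> \<eta>)"
  unfolding mult_char_def char_mult_def by auto

lemma twist_zero:
  fixes g :: "'b \<Rightarrow> complex"
  assumes "finite A" "\<And>a. a\<in>A \<Longrightarrow> f a \<in> A" "\<And>a. a\<in>A \<Longrightarrow> h a \<in> A"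
    "\<And>a. a\<in>A \<Longrightarrow> h (f a) = a" "\<And>a. a\<in>A \<Longrightarrow> f (h a) = a"
    "\<And>a. a\<in>A \<Longrightarrow> g (f a) = c * g a" "c \<noteq> 1"
  shows "sum g A = 0"
proof -
  have "sum g A = sum (\<lambda>a. g (f a)) A"
    by (rule sum.reindex_bij_witness[where i=f and j=h]) (use assms in auto)
  also have "\<dots> = c * sum g A" using assms(6) by (simp add: sum_distrib_left)
  finally have "sum g A = c * sum g A" .
  then have "(1 - c) * sum g A = 0" by (simp add: algebra_simps)
  then show ?thesis using assms(7) by simp
qed

lemma unit_cancel: "u \<in> ring_units \<Longrightarrow> p * u = q * u \<Longrightarrow> p = q"
proof -
  assume u: "u \<in> ring_units" and e: "p * u = q * u"
  have "p = p * (u * uinv u)" using uinv[OF u] by simp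
  also have "\<dots> = q * (u * uinv u)" using e by (simp add: mult.assoc[symmetric])
  also have "\<dots> = q" using uinv[OF u] by simp
  finally show "p = q" .
qed

lemma unit_eq_mult_uinv: "u \<in> ring_units \<Longrightarrow> y = z * u \<Longrightarrow> y * uinv u = z"
proof -
  assume u: "u \<in> ring_units" and e: "y = z * u"
  have "y * uinv u = z * (u * uinv u)" using e by (simp add: mult.assoc)
  then show "y * uinv u = z" using uinv[OF u] by simp
qed

lemma mult_char_uinv: "mult_char \<chi> \<Longrightarrow> u \<in> ring_units \<Longrightarrow> \<chi> (uinv u) * \<chi> u = 1"
proof -
  assume m: "mult_char \<chi>" and u: "u \<in> ring_units"
  have "\<chi> (u * uinv u) = \<chi> u * \<chi> (uinv u)" using mult_char_mult[OF m u uinv_unit[OF u]] .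
  then show ?thesis using uinv[OF u] mult_char_one[OF m] by (simp add: mult.commute)
qed

locale lr =
  fixes M :: "'a::{comm_ring_1,finite} set"
  assumes local: "local_ring TYPE('a)" and max: "maximal_ideal M"
begin

lemma idM: "is_ideal M" using max unfolding maximal_ideal_def by auto

lemma one_notin: "1 \<notin> M"
proof
  assume "1 \<in> M"
  then have "\<forall>r. r \<in> M" using ideal_mult[OF idM, of 1] by auto
  then show False using max unfolding maximal_ideal_def by auto
qed

lemma zero_ne_one: "(0::'a) \<noteq> 1" using one_notin ideal_0[OF idM] by metis

lemma exists_max:
  fixes I :: "'a set"
  assumes "is_ideal I" "I \<noteq> UNIV"
  shows "\<exists>J. maximal_ideal J \<and> I \<subseteq> J"
proof -
  let ?S = "{J::'a set. is_ideal J \<and> J \<noteq> UNIV \<and> I \<subseteq> J}"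
  have fin: "finite (card ` ?S)" by simp
  have ne: "card ` ?S \<noteq> {}" using assms by auto
  have "Max (card ` ?S) \<in> card ` ?S" by (rule Max_in[OF fin ne])
  then obtain J where J: "J \<in> ?S" "Max (card ` ?S) = card J" unfolding image_iff by blast
  have "maximal_ideal J"
    unfolding maximal_ideal_def
  proof (intro conjI allI impI)
    fix K assume K: "is_ideal K \<and> J \<subseteq> K"
    show "K = J \<or> K = UNIV"
    proof (cases "K = UNIV")
      case False
      then have "K \<in> ?S" using K J by auto
      then have "card K \<le> card J" using J Max_ge[OF fin] by auto
      then have "K = J" using K by (metis card_seteq finite)
      then show ?thesis by simp
    qed simp
  qed (use J in auto)
  then show ?thesis using J by auto
qed

lemma max_unique: "maximal_ideal J \<Longrightarrow> J = M"
  using local max unfolding local_ring_def by auto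

lemma unit_iff: "x \<in> ring_units \<longleftrightarrow> x \<notin> M"
proof
  assume "x \<in> ring_units"
  then show "x \<notin> M" using uinv[of x] ideal_mult[OF idM, of x "uinv x"] one_notin
    by (metis mult.commute)
next
  assume xM: "x \<notin> M"
  show "x \<in> ring_units"
  proof (rule ccontr)
    assume nu: "x \<notin> ring_units"
    let ?I = "{r * x | r. True}"
    have id: "is_ideal ?I" unfolding is_ideal_def
    proof (intro conjI ballI allI)
      show "0 \<in> ?I" by (metis (mono_tags) mem_Collect_eq mult_zero_left)
    next
      fix a b assume "a \<in> ?I" "b \<in> ?I"
      then obtain r s where "a = r * x" "b = s * x" by blast
      then have "a + b = (r + s) * x" by (simp add: distrib_right)
      then show "a + b \<in> ?I" by blast
    next
      fix t a assume "a \<in> ?I"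
      then obtain r where "a = r * x" by blast
      then have "t * a = (t * r) * x" by (simp add: mult.assoc)
      then show "t * a \<in> ?I" by blast
    qed
    have "1 \<notin> ?I"
    proof
      assume "1 \<in> ?I"
      then obtain r where "1 = r * x" by blast
      then have "1 = x * r" by (simp add: mult.commute)
      then have "x dvd 1" by (rule dvdI)
      then show False using nu unfolding ring_units_iff by simp
    qed
    then have "?I \<noteq> UNIV" by blast
    then obtain J where "maximal_ideal J" "?I \<subseteq> J" using exists_max id by blast
    then have "?I \<subseteq> M" using max_unique by auto
    moreover have "x \<in> ?I" by (metis (mono_tags) mem_Collect_eq mult_1)
    ultimately show False using xM by auto
  qed
qed

lemma field_iff: "ring_is_field TYPE('a) \<longleftrightarrow> M = {0}"
proof
  assume f: "ring_is_field TYPE('a)"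
  show "M = {0}"
  proof (intro set_eqI iffI)
    fix x assume "x \<in> M"
    then show "x \<in> {0}" using f unit_iff unfolding ring_is_field_def ring_units_def by auto
  qed (use ideal_0[OF idM] in auto)
next
  assume "M = {0}"
  then show "ring_is_field TYPE('a)" using zero_ne_one unit_iff
    unfolding ring_is_field_def ring_units_def by auto
qed

lemma one_plus_unit: "m \<in> M \<Longrightarrow> 1 + m \<in> ring_units"
  using unit_iff ideal_diff[OF idM, of "1+m" m] one_notin by auto

lemma unit_plus_M: "u \<in> ring_units \<Longrightarrow> m \<in> M \<Longrightarrow> u + m \<in> ring_units"
  using unit_iff ideal_diff[OF idM, of "u+m" m] by auto

end


context lr begin

lemma cond_greatest:
  assumes mc: "mult_char \<chi>"
  shows "\<exists>K. (is_ideal K \<and> K \<subseteq> M \<and> (\<forall>x\<in>K. \<chi>(1+x) = 1)) \<and>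
    (\<forall>I. is_ideal I \<and> I \<subseteq> M \<and> (\<forall>x\<in>I. \<chi>(1+x) = 1) \<longrightarrow> I \<subseteq> K)"
proof -
  define K where "K = {x \<in> M. \<forall>r. \<chi> (1 + r*x) = 1}"
  have idK: "is_ideal K" unfolding is_ideal_def
  proof (intro conjI ballI allI)
    show "0 \<in> K" using ideal_0[OF idM] mult_char_one[OF mc] unfolding K_def by auto
  next
    fix x y assume x: "x \<in> K" and y: "y \<in> K"
    have "x + y \<in> M" using x y ideal_add[OF idM] unfolding K_def by auto
    moreover have "\<chi> (1 + r * (x + y)) = 1" for r
    proof -
      have rx: "r * x \<in> M" using x ideal_mult[OF idM] unfolding K_def by auto
      define a where "a = 1 + r * x"
      have a: "a \<in> ring_units" using one_plus_unit[OF rx] a_def by simp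
      define w where "w = uinv a"
      have aw: "a * w = 1" using uinv[OF a] w_def by simp
      have wy: "(w * r) * y \<in> M" using y ideal_mult[OF idM] unfolding K_def by auto
      have "1 + r * (x + y) = a * (1 + (w * r) * y)"
      proof -
        have "1 + r * (x + y) = 1 + r * (x + y) + r * y * (a * w - 1)" using aw by simp
        also have "\<dots> = a * (1 + (w * r) * y)" unfolding a_def by (simp add: algebra_simps)
        finally show ?thesis .
      qed
      then have "\<chi> (1 + r * (x + y)) = \<chi> a * \<chi> (1 + (w * r) * y)"
        using mult_char_mult[OF mc a one_plus_unit[OF wy]] by simp
      also have "\<dots> = 1" using x y unfolding K_def a_def by auto
      finally show ?thesis .
    qed
    ultimately show "x + y \<in> K" unfolding K_def by auto
  next
    fix s x assume x: "x \<in> K"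
    then show "s * x \<in> K" using ideal_mult[OF idM] unfolding K_def
      by (auto simp: mult.assoc[symmetric])
  qed
  have "K \<subseteq> M" unfolding K_def by auto
  moreover have "\<forall>x\<in>K. \<chi>(1+x) = 1" unfolding K_def by (metis (mono_tags) mem_Collect_eq mult_1)
  moreover have "\<forall>I. is_ideal I \<and> I \<subseteq> M \<and> (\<forall>x\<in>I. \<chi>(1+x) = 1) \<longrightarrow> I \<subseteq> K"
    unfolding K_def using ideal_mult by blast
  ultimately show ?thesis using idK by blast
qed

lemma prim_nontriv: "primitive_char M \<chi> \<Longrightarrow> \<not> trivial_char \<chi>"
proof
  assume "primitive_char M \<chi>" "trivial_char \<chi>"
  then have "(UNIV :: 'a set) = {0}" unfolding primitive_char_def conductor_def by simp
  then have "(1::'a) \<in> {0}" by (metis UNIV_I)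
  then show False using zero_ne_one by simp
qed

lemma cond_char:
  assumes mc: "mult_char \<chi>" and nt: "\<not> trivial_char \<chi>"
  shows "\<exists>K. is_ideal K \<and> K \<subseteq> M \<and> (\<forall>x\<in>K. \<chi>(1+x) = 1) \<and>
    (\<forall>I. is_ideal I \<and> I \<subseteq> M \<and> (\<forall>x\<in>I. \<chi>(1+x) = 1) \<longrightarrow> I \<subseteq> K) \<and>
    conductor M \<chi> = K"
proof -
  obtain K where K: "is_ideal K \<and> K \<subseteq> M \<and> (\<forall>x\<in>K. \<chi>(1+x) = 1)"
    "\<forall>I. is_ideal I \<and> I \<subseteq> M \<and> (\<forall>x\<in>I. \<chi>(1+x) = 1) \<longrightarrow> I \<subseteq> K"
    using cond_greatest[OF mc] by blast
  have "(GREATEST I. is_ideal I \<and> I \<subseteq> M \<and> (\<forall>x\<in>I. \<chi> (1 + x) = 1)) = K"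
    by (rule Greatest_equality) (use K in auto)
  then have c: "conductor M \<chi> = K" unfolding conductor_def using nt by simp
  show ?thesis using K c by blast
qed

lemma prim_witness:
  assumes "mult_char \<chi>" "primitive_char M \<chi>" "is_ideal I" "I \<subseteq> M" "I \<noteq> {0}"
  shows "\<exists>x\<in>I. \<chi>(1+x) \<noteq> 1"
proof (rule ccontr)
  assume na: "\<not> ?thesis"
  obtain K where K: "is_ideal K" "K \<subseteq> M" "\<forall>x\<in>K. \<chi>(1+x) = 1"
    "\<forall>I. is_ideal I \<and> I \<subseteq> M \<and> (\<forall>x\<in>I. \<chi>(1+x) = 1) \<longrightarrow> I \<subseteq> K"
    "conductor M \<chi> = K" using cond_char[OF assms(1) prim_nontriv[OF assms(2)]] by blast
  have "\<forall>x\<in>I. \<chi>(1+x) = 1" using na by simp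
  then have "I \<subseteq> K" using K(4) assms(3,4) by blast
  moreover have "K = {0}" using K(5) assms(2) unfolding primitive_char_def by simp
  ultimately have "I \<subseteq> {0}" by simp
  then have "I = {0}" using ideal_0[OF assms(3)] by blast
  then show False using assms(5) by simp
qed

lemma nonprim_ideal:
  assumes "mult_char \<chi>" "\<not> trivial_char \<chi>" "\<not> primitive_char M \<chi>"
  shows "\<exists>I. is_ideal I \<and> I \<subseteq> M \<and> I \<noteq> {0} \<and> (\<forall>x\<in>I. \<chi>(1+x) = 1)"
proof -
  obtain K where K: "is_ideal K" "K \<subseteq> M" "\<forall>x\<in>K. \<chi>(1+x) = 1"
    "conductor M \<chi> = K" using cond_char[OF assms(1,2)] by blast
  have "K \<noteq> {0}" using K(4) assms(3) unfolding primitive_char_def by simp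
  then show ?thesis using K(1,2,3) by blast
qed

lemma sum_ideal_zero:
  assumes mc: "mult_char \<eta>" and I: "is_ideal I" "I \<subseteq> M" and x0: "x0 \<in> I" "\<eta>(1+x0) \<noteq> 1"
  shows "(\<Sum>y\<in>I. \<eta>(1+y)) = 0"
proof -
  have u: "1 + x0 \<in> ring_units" using one_plus_unit x0 I by auto
  let ?w = "uinv (1 + x0)"
  have w: "(1 + x0) * ?w = 1" using uinv[OF u] .
  show ?thesis
  proof (rule twist_zero[where f="\<lambda>y. x0 + y * (1 + x0)" and h="\<lambda>z. (z - x0) * ?w" and c="\<eta>(1+x0)"])
    fix y assume y: "y \<in> I"
    show "x0 + y * (1 + x0) \<in> I" using y x0 I ideal_add ideal_mult2 by blast
    show "(x0 + y * (1 + x0) - x0) * ?w = y" by (rule unit_eq_mult_uinv[OF u]) simp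
    have "1 + (x0 + y * (1 + x0)) = (1 + x0) * (1 + y)" by (simp add: algebra_simps)
    then show "\<eta> (1 + (x0 + y * (1 + x0))) = \<eta> (1 + x0) * \<eta> (1 + y)"
      using mult_char_mult[OF mc u one_plus_unit] y I by auto
  next
    fix z assume z: "z \<in> I"
    show "(z - x0) * ?w \<in> I" using z x0 I ideal_diff ideal_mult2 by blast
    have "(z - x0) * ?w * (1 + x0) = z - x0" using w by (simp add: algebra_simps)
    then show "x0 + (z - x0) * ?w * (1 + x0) = z" by simp
  qed (use x0 in auto)
qed

lemma sum_units_zero:
  fixes \<eta> :: "'a \<Rightarrow> complex"
  assumes mc: "mult_char \<eta>" and nt: "\<not> trivial_char \<eta>"
  shows "(\<Sum>u\<in>ring_units. \<eta> u) = 0"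
proof -
  obtain u0 where u0: "u0 \<in> ring_units" "\<eta> u0 \<noteq> 1" using nt unfolding trivial_char_def by auto
  let ?w = "uinv u0"
  show ?thesis
  proof (rule twist_zero[where f="\<lambda>u::'a. u0 * u" and h="\<lambda>u::'a. ?w * u" and c="\<eta> u0"])
    fix u :: 'a assume u: "u \<in> ring_units"
    show "u0 * u \<in> ring_units" "?w * u \<in> ring_units" using u u0 units_mult uinv_unit by auto
    have "?w * (u0 * u) = (u0 * ?w) * u" "u0 * (?w * u) = (u0 * ?w) * u" by (simp_all add: mult_ac)
    then show "?w * (u0 * u) = u" "u0 * (?w * u) = u" using uinv[OF u0(1)] by simp_all
    show "\<eta> (u0 * u) = \<eta> u0 * \<eta> u" using mult_char_mult[OF mc u0(1) u] .
  qed (use u0 in auto)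
qed

end


context lr begin

definition DD :: "'a set" where "DD = {u. u \<in> ring_units \<and> 1 - u \<in> ring_units}"

lemma one_minus: "a + b = (1::'b::comm_ring_1) \<Longrightarrow> 1 - a = b"
  by (simp add: algebra_simps)

lemma jac_D: "jacobi_sum \<chi> \<eta> = (\<Sum>u\<in>DD. \<chi> u * \<eta> (1 - u))"
  unfolding jacobi_sum_def DD_def
  by (rule sym, rule sum.reindex_bij_witness[where j="\<lambda>u. (u, 1 - u)" and i=fst])
    (auto dest!: one_minus)

lemma M_mult_unit_M: "m \<in> M \<Longrightarrow> r * m \<in> M" using ideal_mult[OF idM] .

lemma part1a:
  assumes mc: "mult_char \<chi>" and me: "mult_char \<eta>" and pe: "primitive_char M \<eta>"
    and nt: "\<not> trivial_char \<chi>" and np: "\<not> primitive_char M \<chi>"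
  shows "jacobi_sum \<chi> \<eta> = 0"
proof -
  obtain I where I: "is_ideal I" "I \<subseteq> M" "I \<noteq> {0}" "\<forall>x\<in>I. \<chi>(1+x) = 1"
    using nonprim_ideal[OF mc nt np] by blast
  obtain x0 where x0: "x0 \<in> I" "\<eta>(1+x0) \<noteq> 1" using prim_witness[OF me pe I(1-3)] by blast
  have S0: "(\<Sum>y\<in>I. \<eta>(1+y)) = 0" using sum_ideal_zero[OF me I(1,2) x0] .
  define F where "F u = \<chi> u * \<eta> (1 - u)" for u
  have J: "jacobi_sum \<chi> \<eta> = sum F DD" unfolding jac_D F_def ..
  have shift: "sum F DD = (\<Sum>u\<in>DD. F (u * (1 + x)))" if x: "x \<in> I" for x
  proof -
    have xM: "x \<in> M" using x I by auto
    have u1: "1 + x \<in> ring_units" using one_plus_unit[OF xM] .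
    let ?w = "uinv (1 + x)"
    have w: "(1 + x) * ?w = 1" using uinv[OF u1] .
    show ?thesis
    proof (rule sum.reindex_bij_witness[where j="\<lambda>u. u * ?w" and i="\<lambda>u. u * (1 + x)"])
      fix a assume a: "a \<in> DD"
      have "a * ?w * (1 + x) = a * ((1 + x) * ?w)" by (simp add: mult_ac)
      then show aw: "a * ?w * (1 + x) = a" using w by simp
      show "F (a * ?w * (1 + x)) = F a" unfolding aw ..
      have "1 - a * ?w = ((1 - a) + x) * ?w"
      proof -
        have "1 - a * ?w = 1 - a * ?w - (1 - (1 + x) * ?w)" using w by simp
        also have "\<dots> = ((1 - a) + x) * ?w" by (simp add: algebra_simps)
        finally show ?thesis .
      qed
      then show "a * ?w \<in> DD" using a unit_plus_M[OF _ xM] units_mult uinv_unit[OF u1]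
        unfolding DD_def by auto
    next
      fix b assume b: "b \<in> DD"
      show "b * (1 + x) * ?w = b" using w by (simp add: mult.assoc)
      have eq1: "1 - b * (1 + x) = (1 - b) + (- (b * x))" by (simp add: algebra_simps)
      have bxM: "- (b * x) \<in> M" using ideal_uminus[OF idM ideal_mult[OF idM xM]] .
      have b1: "1 - b \<in> ring_units" "b \<in> ring_units" using b unfolding DD_def by auto
      have "(1 - b) + (- (b * x)) \<in> ring_units" by (rule unit_plus_M[OF b1(1) bxM])
      then have "1 - b * (1 + x) \<in> ring_units" unfolding eq1 .
      then show "b * (1 + x) \<in> DD" using units_mult[of b "1 + x"] b u1 unfolding DD_def by simp
    qed
  qed
  have inner: "(\<Sum>x\<in>I. F (u * (1 + x))) = 0" if u: "u \<in> DD" for u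
  proof -
    have uu: "u \<in> ring_units" and u1: "1 - u \<in> ring_units" using u unfolding DD_def by auto
    let ?v = "uinv (1 - u)"
    have v: "(1 - u) * ?v = 1" using uinv[OF u1] .
    define c where "c = - u * ?v"
    have cu: "c \<in> ring_units" unfolding c_def using units_mult units_uminus uu uinv_unit[OF u1] by auto
    have eq: "F (u * (1 + x)) = \<chi> u * \<eta> (1 - u) * \<eta> (1 + c * x)" if x: "x \<in> I" for x
    proof -
      have xM: "x \<in> M" using x I by auto
      have cx: "c * x \<in> M" using M_mult_unit_M[OF xM] .
      have "1 - u * (1 + x) = (1 - u) * (1 + c * x)"
      proof -
        have "1 - u * (1 + x) = 1 - u * (1 + x) + u * x * (1 - (1 - u) * ?v)" using v by simp
        also have "\<dots> = (1 - u) * (1 + c * x)" unfolding c_def by (simp add: algebra_simps)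
        finally show ?thesis .
      qed
      then show ?thesis unfolding F_def
        using mult_char_mult[OF mc uu one_plus_unit[OF xM]] mult_char_mult[OF me u1 one_plus_unit[OF cx]]
          I(4) x by simp
    qed
    have "(\<Sum>x\<in>I. \<eta> (1 + c * x)) = (\<Sum>y\<in>I. \<eta>(1+y))"
    proof (rule sum.reindex_bij_witness[where j="\<lambda>x. c * x" and i="\<lambda>y. uinv c * y"])
      fix a assume "a \<in> I" then show "uinv c * (c * a) = a" "c * a \<in> I"
        using uinv[OF cu] ideal_mult[OF I(1)] by (auto simp: mult.assoc[symmetric] mult.commute[of "uinv c"])
    next
      fix b assume "b \<in> I" then show "c * (uinv c * b) = b" "uinv c * b \<in> I"
        using uinv[OF cu] ideal_mult[OF I(1)] by (auto simp: mult.assoc[symmetric])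
    qed simp
    then show ?thesis using S0 eq by (simp add: sum_distrib_left[symmetric])
  qed
  have "of_nat (card I) * sum F DD = (\<Sum>x\<in>I. sum F DD)" by simp
  also have "\<dots> = (\<Sum>x\<in>I. \<Sum>u\<in>DD. F (u * (1 + x)))" using shift by (rule sum.cong[OF refl])
  also have "\<dots> = (\<Sum>u\<in>DD. \<Sum>x\<in>I. F (u * (1 + x)))" by (rule sum.swap)
  also have "\<dots> = 0" using inner by simp
  finally have "of_nat (card I) * sum F DD = 0" .
  moreover have "card I \<noteq> 0" using I ideal_0 by (metis card_0_eq empty_iff finite)
  ultimately show ?thesis using J by simp
qed

lemma part1b:
  assumes me: "mult_char \<eta>" and pe: "primitive_char M \<eta>"
    and tr: "trivial_char \<chi>" and nf: "M \<noteq> {0}"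
  shows "jacobi_sum \<chi> \<eta> = 0"
proof -
  have "jacobi_sum \<chi> \<eta> = (\<Sum>u\<in>DD. \<eta> (1 - u))"
    unfolding jac_D using tr unfolding trivial_char_def DD_def by (intro sum.cong) auto
  also have "\<dots> = (\<Sum>v\<in>DD. \<eta> v)"
    by (rule sum.reindex_bij_witness[where j="\<lambda>u. 1 - u" and i="\<lambda>u. 1 - u"]) (auto simp: DD_def)
  finally have J: "jacobi_sum \<chi> \<eta> = (\<Sum>v\<in>DD. \<eta> v)" .
  define E where "E = {v. 1 - v \<in> M}"
  have un: "ring_units = DD \<union> E"
  proof (intro set_eqI iffI)
    fix v :: 'a assume "v \<in> ring_units" then show "v \<in> DD \<union> E" unfolding DD_def E_def using unit_iff by auto
  next
    fix v :: 'a assume "v \<in> DD \<union> E"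
    moreover have "v \<in> E \<Longrightarrow> v \<in> ring_units" unfolding E_def
      using unit_plus_M[OF units_one ideal_uminus[OF idM]] by fastforce
    ultimately show "v \<in> ring_units" unfolding DD_def by auto
  qed
  have dis: "DD \<inter> E = {}" unfolding DD_def E_def using unit_iff by auto
  have SE: "(\<Sum>v\<in>E. \<eta> v) = (\<Sum>m\<in>M. \<eta> (1 + m))"
    by (rule sum.reindex_bij_witness[where j="\<lambda>v. v - 1" and i="\<lambda>m. 1 + m"])
      (auto simp: E_def dest: ideal_uminus[OF idM])
  obtain x0 where x0: "x0 \<in> M" "\<eta>(1+x0) \<noteq> 1" using prim_witness[OF me pe idM _ nf] by blast
  have "(\<Sum>m\<in>M. \<eta> (1 + m)) = 0" using sum_ideal_zero[OF me idM _ x0] by simp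
  moreover have "(\<Sum>u\<in>ring_units. \<eta> u) = 0" using sum_units_zero[OF me prim_nontriv[OF pe]] .
  ultimately show ?thesis using J SE un dis sum.union_disjoint[of DD E \<eta>] by simp
qed

end


context lr begin

lemma part2:
  assumes mc: "mult_char \<chi>" and me: "mult_char \<eta>" and pc: "primitive_char M \<chi>"
    and nt: "\<not> trivial_char (char_mult \<chi> \<eta>)" and np: "\<not> primitive_char M (char_mult \<chi> \<eta>)"
  shows "jacobi_sum \<chi> \<eta> = 0"
proof -
  obtain I where I: "is_ideal I" "I \<subseteq> M" "I \<noteq> {0}" "\<forall>x\<in>I. char_mult \<chi> \<eta> (1+x) = 1"
    using nonprim_ideal[OF mult_char_char_mult[OF mc me] nt np] by blast
  obtain x where x: "x \<in> I" "\<chi>(1+x) \<noteq> 1" using prim_witness[OF mc pc I(1-3)] by blast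
  have xM: "x \<in> M" using x I by auto
  have u1: "1 + x \<in> ring_units" using one_plus_unit[OF xM] .
  define F where "F u = \<chi> u * \<eta> (1 - u)" for u
  define f where "f u = u * (1 + x) * uinv (1 + u * x)" for u
  define h where "h u = u * uinv (1 + x - u * x)" for u
  have fprops: "f u \<in> DD \<and> 1 - f u = (1 - u) * uinv (1 + u * x) \<and>
      1 + x - f u * x = (1 + x) * uinv (1 + u * x) \<and> F (f u) = \<chi> (1 + x) * F u"
    if u: "u \<in> DD" for u
  proof -
    have uu: "u \<in> ring_units" and u1': "1 - u \<in> ring_units" using u unfolding DD_def by auto
    have uxI: "u * x \<in> I" using ideal_mult[OF I(1) x(1)] .
    have a: "1 + u * x \<in> ring_units" using one_plus_unit I uxI by auto
    define wa where "wa = uinv (1 + u * x)"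
    have aw: "(1 + u * x) * wa = 1" using uinv[OF a] wa_def by simp
    have wa: "wa \<in> ring_units" using uinv_unit[OF a] wa_def by simp
    have e1: "1 - f u = (1 - u) * wa"
    proof -
      have "1 - f u = 1 - f u - (1 - (1 + u * x) * wa)" using aw by simp
      also have "\<dots> = (1 - u) * wa" unfolding f_def wa_def[symmetric] by (simp add: algebra_simps)
      finally show ?thesis .
    qed
    have e2: "1 + x - f u * x = (1 + x) * wa"
    proof -
      have "1 + x - f u * x = 1 + x - f u * x - (1 + x) * (1 - (1 + u * x) * wa)" using aw by simp
      also have "\<dots> = (1 + x) * wa" unfolding f_def wa_def[symmetric] by (simp add: algebra_simps)
      finally show ?thesis .
    qed
    have fu: "f u \<in> ring_units" unfolding f_def wa_def[symmetric] using uu u1 wa units_mult by auto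
    have "f u \<in> DD" using fu e1 u1' wa units_mult unfolding DD_def by auto
    moreover have "F (f u) = \<chi> (1 + x) * F u"
    proof -
      have lw: "\<chi> wa * \<eta> wa = 1"
      proof -
        have "char_mult \<chi> \<eta> (1 + u * x) = 1" using I(4) uxI by blast
        moreover have "\<chi> wa * \<chi> (1 + u * x) = 1" "\<eta> wa * \<eta> (1 + u * x) = 1"
          using mult_char_uinv[OF mc a] mult_char_uinv[OF me a] wa_def by auto
        ultimately have h: "\<chi> (1 + u * x) * \<eta> (1 + u * x) = 1" and h1: "\<chi> wa * \<chi> (1 + u * x) = 1"
          and h2: "\<eta> wa * \<eta> (1 + u * x) = 1" unfolding char_mult_def by simp_all
        have "\<chi> wa * \<eta> wa = \<chi> wa * \<eta> wa * (\<chi> (1 + u * x) * \<eta> (1 + u * x))" using h by simp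
        also have "\<dots> = (\<chi> wa * \<chi> (1 + u * x)) * (\<eta> wa * \<eta> (1 + u * x))" by (simp add: mult_ac)
        also have "\<dots> = 1" using h1 h2 by simp
        finally show ?thesis .
      qed
      have c1: "\<chi> (f u) = \<chi> u * \<chi> (1 + x) * \<chi> wa"
      proof -
        have "\<chi> (u * (1 + x) * wa) = \<chi> (u * (1 + x)) * \<chi> wa"
          using mult_char_mult[OF mc units_mult[OF uu u1] wa] .
        also have "\<chi> (u * (1 + x)) = \<chi> u * \<chi> (1 + x)" using mult_char_mult[OF mc uu u1] .
        finally show ?thesis unfolding f_def wa_def by simp
      qed
      have c2: "\<eta> (1 - f u) = \<eta> (1 - u) * \<eta> wa" unfolding e1 using mult_char_mult[OF me u1' wa] .
      have "F (f u) = \<chi> u * \<chi> (1 + x) * \<chi> wa * (\<eta> (1 - u) * \<eta> wa)"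
        unfolding F_def c1 c2 ..
      also have "\<dots> = \<chi> (1 + x) * F u * (\<chi> wa * \<eta> wa)" unfolding F_def by (simp add: algebra_simps)
      finally show ?thesis using lw by simp
    qed
    ultimately show ?thesis using e1 e2 wa_def by simp
  qed
  have hprops: "h v \<in> DD \<and> f (h v) = v" if v: "v \<in> DD" for v
  proof -
    have vu: "v \<in> ring_units" and v1: "1 - v \<in> ring_units" using v unfolding DD_def by auto
    have bM: "x * (1 - v) \<in> M" using ideal_mult2[OF idM xM] .
    have beq: "1 + x - v * x = 1 + x * (1 - v)" by (simp add: algebra_simps)
    have b: "1 + x - v * x \<in> ring_units" using one_plus_unit[OF bM] unfolding beq .
    define wb where "wb = uinv (1 + x - v * x)"
    have bw: "(1 + x - v * x) * wb = 1" using uinv[OF b] wb_def by simp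
    have wb: "wb \<in> ring_units" using uinv_unit[OF b] wb_def by simp
    have hv: "h v = v * wb" unfolding h_def wb_def ..
    have e1: "1 - h v = (1 - v) * (1 + x) * wb"
    proof -
      have "1 - h v = 1 - h v - (1 - (1 + x - v * x) * wb)" using bw by simp
      also have "\<dots> = (1 - v) * (1 + x) * wb" unfolding hv by (simp add: algebra_simps)
      finally show ?thesis .
    qed
    have "h v \<in> DD" unfolding DD_def using e1 hv vu wb v1 u1 units_mult by auto
    moreover have "f (h v) = v"
    proof -
      have hvx: "h v * x \<in> M" using M_mult_unit_M[OF xM] .
      have a: "1 + h v * x \<in> ring_units" using one_plus_unit[OF hvx] .
      have "h v * (1 + x) = v * (1 + h v * x)"
      proof -
        have "h v * (1 + x) = h v * (1 + x) - v * (wb * (1 + x - v * x) - 1)" using bw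
          by (simp add: mult.commute)
        also have "\<dots> = v * (1 + h v * x)" unfolding hv by (simp add: algebra_simps)
        finally show ?thesis .
      qed
      then show ?thesis unfolding f_def by (rule unit_eq_mult_uinv[OF a])
    qed
    ultimately show ?thesis ..
  qed
  have hf: "h (f u) = u" if u: "u \<in> DD" for u
  proof -
    have uu: "u \<in> ring_units" using u unfolding DD_def by auto
    have a: "1 + u * x \<in> ring_units" using one_plus_unit[OF M_mult_unit_M[OF xM]] .
    have b: "1 + x - f u * x \<in> ring_units"
      using fprops[OF u] units_mult u1 uinv_unit[OF a] by auto
    have "f u = u * (1 + x - f u * x)" using fprops[OF u] unfolding f_def by (simp add: mult.assoc)
    then show ?thesis unfolding h_def by (rule unit_eq_mult_uinv[OF b])
  qed
  have "sum F DD = 0"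
    by (rule twist_zero[where f=f and h=h and c="\<chi>(1+x)"]) (use fprops hprops hf x in auto)
  then show ?thesis unfolding jac_D F_def .
qed

end


context lr begin

lemma add_char_add: "add_char \<psi> \<Longrightarrow> \<psi> (x + y) = \<psi> x * \<psi> y"
  unfolding add_char_def by blast

lemma inner_zero:
  assumes ml: "mult_char lam" and pl: "primitive_char M lam" and n: "n \<in> M"
  shows "(\<Sum>a\<in>ring_units. lam a * \<psi> (a * n)) = 0"
proof -
  obtain w where w: "w \<in> ring_units" "w * n = n" "lam w \<noteq> 1"
  proof (cases "n = 0")
    case True
    obtain w where "w \<in> ring_units" "lam w \<noteq> 1" using prim_nontriv[OF pl] unfolding trivial_char_def by blast
    then show ?thesis using that True by simp
  next
    case False
    define K where "K = {r. r * n = 0}"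
    have idK: "is_ideal K" unfolding K_def is_ideal_def by (simp add: distrib_right mult.assoc)
    have KM: "K \<subseteq> M"
    proof
      fix r assume r: "r \<in> K"
      show "r \<in> M"
      proof (rule ccontr)
        assume "r \<notin> M"
        then have ru: "r \<in> ring_units" using unit_iff by auto
        have "n = uinv r * (r * n)" using uinv[OF ru] by (simp add: mult.assoc[symmetric] mult.commute[of "uinv r"])
        then show False using r False unfolding K_def by simp
      qed
    qed
    have "\<not> inj (\<lambda>r. n * r)"
    proof
      assume "inj (\<lambda>r. n * r)"
      moreover have "finite (UNIV :: 'a set)" by simp
      ultimately have "surj (\<lambda>r. n * r)" by (intro finite_UNIV_inj_surj)
      then obtain r where "1 = n * r" by (rule surjE)
      then have "n \<in> ring_units" unfolding ring_units_iff by (rule dvdI)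
      then show False using unit_iff n by auto
    qed
    then obtain r s where rs: "n * r = n * s" "r \<noteq> s" unfolding inj_def by blast
    have "(r - s) * n = r * n - s * n" by (simp add: left_diff_distrib)
    also have "\<dots> = 0" using rs(1) by (simp add: mult.commute)
    finally have "(r - s) * n = 0" .
    then have "r - s \<in> K" "r - s \<noteq> 0" using rs(2) unfolding K_def by auto
    then have "K \<noteq> {0}" by auto
    then obtain k where k: "k \<in> K" "lam(1+k) \<noteq> 1" using prim_witness[OF ml pl idK KM] by blast
    have "(1 + k) * n = n" using k unfolding K_def by (simp add: algebra_simps)
    moreover have "1 + k \<in> ring_units" using one_plus_unit k KM by auto
    ultimately show ?thesis using that k by blast
  qed
  show ?thesis
  proof (rule twist_zero[where f="\<lambda>a::'a. a * w" and h="\<lambda>a::'a. a * uinv w" and c="lam w"])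
    fix a :: 'a assume a: "a \<in> ring_units"
    show "a * w \<in> ring_units" "a * uinv w \<in> ring_units" using a w uinv_unit units_mult by auto
    show "a * w * uinv w = a" "a * uinv w * w = a" using uinv[OF w(1)]
      by (simp_all add: mult.assoc mult.commute[of "uinv w"])
    have "a * w * n = a * n" using w(2) by (simp add: mult.assoc)
    then show "lam (a * w) * \<psi> (a * w * n) = lam w * (lam a * \<psi> (a * n))"
      using mult_char_mult[OF ml a w(1)] by (simp add: mult_ac)
  qed (use w in auto)
qed

lemma part3:
  assumes mc: "mult_char \<chi>" and me: "mult_char \<eta>" and ps: "add_char \<psi>"
    and pl: "primitive_char M (char_mult \<chi> \<eta>)"
  shows "gauss_sum \<psi> \<chi> * gauss_sum \<psi> \<eta> = jacobi_sum \<chi> \<eta> * gauss_sum \<psi> (char_mult \<chi> \<eta>)"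
proof -
  define U where "U = (ring_units :: 'a set)"
  define g where "g p = \<psi> (fst p + snd p) * \<chi> (fst p) * \<eta> (snd p)" for p
  define P1 where "P1 = {p \<in> U \<times> U. fst p + snd p \<in> U}"
  define P2 where "P2 = {p \<in> U \<times> U. fst p + snd p \<notin> U}"
  have "gauss_sum \<psi> \<chi> * gauss_sum \<psi> \<eta> = (\<Sum>a\<in>U. \<Sum>b\<in>U. (\<psi> a * \<chi> a) * (\<psi> b * \<eta> b))"
    unfolding gauss_sum_def U_def by (rule sum_product)
  also have "\<dots> = (\<Sum>p\<in>U \<times> U. g p)"
    unfolding sum.cartesian_product g_def by (intro sum.cong refl) (auto simp: add_char_add[OF ps])
  also have "\<dots> = sum g P1 + sum g P2"
  proof -
    have "U \<times> U = P1 \<union> P2" unfolding P1_def P2_def by blast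
    moreover have "P1 \<inter> P2 = {}" unfolding P1_def P2_def by blast
    ultimately show ?thesis using sum.union_disjoint[of P1 P2 g] by simp
  qed
  finally have G: "gauss_sum \<psi> \<chi> * gauss_sum \<psi> \<eta> = sum g P1 + sum g P2" .
  have S1: "sum g P1 = (\<Sum>p\<in>U \<times> DD. \<psi> (fst p) * char_mult \<chi> \<eta> (fst p) * (\<chi> (snd p) * \<eta> (1 - snd p)))"
  proof (rule sum.reindex_bij_witness[where j="\<lambda>(a,b). (a + b, a * uinv (a + b))"
        and i="\<lambda>(c,u). (c * u, c * (1 - u))"])
    fix p assume p: "p \<in> P1"
    obtain a b where ab: "p = (a, b)" by (cases p)
    have a: "a \<in> U" and b: "b \<in> U" and s: "a + b \<in> U" using p ab unfolding P1_def by auto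
    have sw: "(a + b) * uinv (a + b) = 1" using uinv s U_def by auto
    have e1: "1 - a * uinv (a + b) = b * uinv (a + b)"
    proof -
      have "1 - a * uinv (a + b) = 1 - a * uinv (a + b) - (1 - (a + b) * uinv (a + b))" using sw by simp
      also have "\<dots> = b * uinv (a + b)" by (simp add: algebra_simps)
      finally show ?thesis .
    qed
    have q1: "(a + b) * (a * uinv (a + b)) = a" using sw by (simp add: mult_ac)
    have q2: "(a + b) * (b * uinv (a + b)) = b" using sw by (simp add: mult_ac)
    show "(\<lambda>(c, u). (c * u, c * (1 - u))) ((\<lambda>(a, b). (a + b, a * uinv (a + b))) p) = p"
      using ab e1 q1 q2 by simp
    show "(\<lambda>(a, b). (a + b, a * uinv (a + b))) p \<in> U \<times> DD"
      using ab e1 a b s units_mult uinv_unit unfolding U_def DD_def by auto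
    have gp: "g p = \<psi> (a + b) * (\<chi> (a + b) * \<chi> (a * uinv (a + b))) * (\<eta> (a + b) * \<eta> (b * uinv (a + b)))"
    proof -
      have "a = (a + b) * (a * uinv (a + b))" "b = (a + b) * (b * uinv (a + b))"
        using sw by (simp_all add: algebra_simps)
      then have "\<chi> a = \<chi> (a + b) * \<chi> (a * uinv (a + b))" "\<eta> b = \<eta> (a + b) * \<eta> (b * uinv (a + b))"
        using mult_char_mult[OF mc, of "a+b" "a * uinv (a + b)"] mult_char_mult[OF me, of "a+b" "b * uinv (a + b)"]
          s a b units_mult uinv_unit U_def by metis+
      then show ?thesis unfolding g_def ab by simp
    qed
    show "\<psi> (fst ((\<lambda>(a, b). (a + b, a * uinv (a + b))) p)) *
         char_mult \<chi> \<eta> (fst ((\<lambda>(a, b). (a + b, a * uinv (a + b))) p)) *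
         (\<chi> (snd ((\<lambda>(a, b). (a + b, a * uinv (a + b))) p)) *
          \<eta> (1 - snd ((\<lambda>(a, b). (a + b, a * uinv (a + b))) p))) = g p"
      unfolding ab prod.case fst_conv snd_conv e1 char_mult_def using gp[unfolded ab] by (simp add: mult_ac)
  next
    fix q assume q: "q \<in> U \<times> DD"
    obtain c u where cu: "q = (c, u)" by (cases q)
    have c: "c \<in> U" and u: "u \<in> U" "1 - u \<in> U" using q cu unfolding DD_def U_def by auto
    have cw: "c * uinv c = 1" using uinv c U_def by auto
    have sum: "c * u + c * (1 - u) = c" by (simp add: algebra_simps)
    show "(\<lambda>(a, b). (a + b, a * uinv (a + b))) ((\<lambda>(c, u). (c * u, c * (1 - u))) q) = q"
    proof -
      have "c * u * uinv c = (c * uinv c) * u" by (simp add: mult_ac)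
      then have "c * u * uinv c = u" using cw by simp
      then show ?thesis using cu sum by simp
    qed
    show "(\<lambda>(c, u). (c * u, c * (1 - u))) q \<in> P1"
      using cu sum c u units_mult unfolding P1_def U_def by auto
  qed
  have S1': "sum g P1 = jacobi_sum \<chi> \<eta> * gauss_sum \<psi> (char_mult \<chi> \<eta>)"
  proof -
    have "gauss_sum \<psi> (char_mult \<chi> \<eta>) * jacobi_sum \<chi> \<eta> =
        (\<Sum>c\<in>U. \<psi> c * char_mult \<chi> \<eta> c) * (\<Sum>u\<in>DD. \<chi> u * \<eta> (1 - u))"
      unfolding gauss_sum_def jac_D U_def ..
    also have "\<dots> = (\<Sum>c\<in>U. \<Sum>u\<in>DD. (\<psi> c * char_mult \<chi> \<eta> c) * (\<chi> u * \<eta> (1 - u)))"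
      by (rule sum_product)
    also have "\<dots> = (\<Sum>p\<in>U \<times> DD. \<psi> (fst p) * char_mult \<chi> \<eta> (fst p) * (\<chi> (snd p) * \<eta> (1 - snd p)))"
      by (simp add: sum.cartesian_product split_def)
    finally show ?thesis unfolding S1 by (simp add: mult.commute)
  qed
  have S2: "sum g P2 = (\<Sum>p\<in>U \<times> M. \<eta> (-1) * \<eta> (1 + snd p) *
      (char_mult \<chi> \<eta> (fst p) * \<psi> (fst p * (- snd p))))"
  proof (rule sum.reindex_bij_witness[where j="\<lambda>(a,b). (a, - (b * uinv a) - 1)"
        and i="\<lambda>(a,m). (a, - a * (1 + m))"])
    fix p assume p: "p \<in> P2"
    obtain a b where ab: "p = (a, b)" by (cases p)
    have a: "a \<in> U" and b: "b \<in> U" and s: "a + b \<notin> U" using p ab unfolding P2_def by auto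
    have aw: "a * uinv a = 1" using uinv a U_def by auto
    have e: "- (b * uinv a) - 1 = - ((a + b) * uinv a)" using aw by (simp add: algebra_simps)
    have "a + b \<in> M" using s unit_iff U_def by simp
    then have mM: "- (b * uinv a) - 1 \<in> M" unfolding e
      using ideal_uminus[OF idM ideal_mult2[OF idM, of "a + b" "uinv a"]] by simp
    have e2: "- a * (1 + (- (b * uinv a) - 1)) = b" using aw by (simp add: algebra_simps)
    show "(\<lambda>(a, m). (a, - a * (1 + m))) ((\<lambda>(a, b). (a, - (b * uinv a) - 1)) p) = p"
      using ab e2 by simp
    show "(\<lambda>(a, b). (a, - (b * uinv a) - 1)) p \<in> U \<times> M" using ab a mM by simp
    define m where "m = - (b * uinv a) - 1"
    have bm: "b = (-1) * a * (1 + m)" using e2 m_def by simp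
    have "g p = \<psi> (a * (- m)) * \<chi> a * (\<eta> (-1) * \<eta> a * \<eta> (1 + m))"
    proof -
      have "a + b = a * (- m)" unfolding bm by (simp add: algebra_simps)
      moreover have "\<eta> b = \<eta> (-1) * \<eta> a * \<eta> (1 + m)"
      proof -
        have m1: "-1 \<in> ring_units" using units_uminus[OF units_one] .
        have au: "a \<in> ring_units" using a U_def by simp
        have mu: "1 + m \<in> ring_units" using one_plus_unit[OF mM[folded m_def]] .
        have "\<eta> ((-1) * a * (1 + m)) = \<eta> ((-1) * a) * \<eta> (1 + m)"
          using mult_char_mult[OF me units_mult[OF m1 au] mu] .
        also have "\<eta> ((-1) * a) = \<eta> (-1) * \<eta> a" using mult_char_mult[OF me m1 au] .
        finally show ?thesis using bm by simp
      qed
      ultimately show ?thesis unfolding g_def ab by simp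
    qed
    then show "\<eta> (- 1) * \<eta> (1 + snd ((\<lambda>(a, b). (a, - (b * uinv a) - 1)) p)) *
         (char_mult \<chi> \<eta> (fst ((\<lambda>(a, b). (a, - (b * uinv a) - 1)) p)) *
          \<psi> (fst ((\<lambda>(a, b). (a, - (b * uinv a) - 1)) p) * - snd ((\<lambda>(a, b). (a, - (b * uinv a) - 1)) p))) =
         g p" using ab m_def unfolding char_mult_def by (simp add: algebra_simps)
  next
    fix q assume q: "q \<in> U \<times> M"
    obtain a m where am: "q = (a, m)" by (cases q)
    have a: "a \<in> U" and m: "m \<in> M" using q am by auto
    have aw: "a * uinv a = 1" using uinv a U_def by auto
    have e: "- (- a * (1 + m) * uinv a) - 1 = m"
    proof -
      have "- (- a * (1 + m) * uinv a) - 1 = (a * uinv a) * (1 + m) - 1" by (simp add: mult_ac)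
      then show ?thesis using aw by simp
    qed
    show "(\<lambda>(a, b). (a, - (b * uinv a) - 1)) ((\<lambda>(a, m). (a, - a * (1 + m))) q) = q"
      using am e by simp
    have "a + - a * (1 + m) = - (a * m)" by (simp add: algebra_simps)
    moreover have "- (a * m) \<in> M" using ideal_uminus[OF idM ideal_mult[OF idM m, of a]] .
    ultimately have nu: "a + - a * (1 + m) \<notin> ring_units" using unit_iff by simp
    have au: "a \<in> ring_units" using a U_def by simp
    have bu: "- a * (1 + m) \<in> ring_units"
      using units_mult[OF units_uminus[OF au] one_plus_unit[OF m]] .
    show "(\<lambda>(a, m). (a, - a * (1 + m))) q \<in> P2"
      using am au bu nu unfolding P2_def U_def by simp
  qed
  have S2': "sum g P2 = 0"
  proof -
    have "sum g P2 = (\<Sum>m\<in>M. \<eta> (-1) * \<eta> (1 + m) * (\<Sum>a\<in>U. char_mult \<chi> \<eta> a * \<psi> (a * (- m))))"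
    proof -
      have "(\<Sum>m\<in>M. \<eta> (-1) * \<eta> (1 + m) * (\<Sum>a\<in>U. char_mult \<chi> \<eta> a * \<psi> (a * (- m)))) =
          (\<Sum>m\<in>M. \<Sum>a\<in>U. \<eta> (-1) * \<eta> (1 + m) * (char_mult \<chi> \<eta> a * \<psi> (a * (- m))))"
        by (simp add: sum_distrib_left)
      also have "\<dots> = (\<Sum>a\<in>U. \<Sum>m\<in>M. \<eta> (-1) * \<eta> (1 + m) * (char_mult \<chi> \<eta> a * \<psi> (a * (- m))))"
        by (rule sum.swap)
      also have "\<dots> = (\<Sum>p\<in>U \<times> M. \<eta> (- 1) * \<eta> (1 + snd p) *
          (char_mult \<chi> \<eta> (fst p) * \<psi> (fst p * - snd p)))"
        by (simp add: sum.cartesian_product split_def)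
      finally show ?thesis unfolding S2 by simp
    qed
    also have "\<dots> = 0"
    proof (rule sum.neutral, rule ballI)
      fix m assume m: "m \<in> M"
      have "(\<Sum>a\<in>U. char_mult \<chi> \<eta> a * \<psi> (a * (- m))) = 0"
        unfolding U_def by (rule inner_zero[OF mult_char_char_mult[OF mc me] pl ideal_uminus[OF idM m]])
      then show "\<eta> (-1) * \<eta> (1 + m) * (\<Sum>a\<in>U. char_mult \<chi> \<eta> a * \<psi> (a * (- m))) = 0" by simp
    qed
    finally show ?thesis .
  qed
  show ?thesis using G S1' S2' by simp
qed

end

theorem mainTheorem17:
  fixes M :: "'a::{comm_ring_1, finite} set"
    and \<chi> \<eta> :: "'a \<Rightarrow> complex"
  assumes "local_ring TYPE('a)"
    and "maximal_ideal M"
    and "mult_char \<chi>" and "mult_char \<eta>"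
  shows "(primitive_char M \<eta> \<longrightarrow>
            ((\<not> trivial_char \<chi> \<and> \<not> primitive_char M \<chi> \<longrightarrow> jacobi_sum \<chi> \<eta> = 0) \<and>
             (trivial_char \<chi> \<and> \<not> ring_is_field TYPE('a) \<longrightarrow> jacobi_sum \<chi> \<eta> = 0)))
       \<and> (primitive_char M \<chi> \<and> primitive_char M \<eta> \<and> \<not> ring_is_field TYPE('a) \<and>
          \<not> trivial_char (char_mult \<chi> \<eta>) \<and> \<not> primitive_char M (char_mult \<chi> \<eta>)
            \<longrightarrow> jacobi_sum \<chi> \<eta> = 0)
       \<and> (\<forall>\<psi>. add_char \<psi> \<and> primitive_add_char \<psi> \<and> primitive_char M (char_mult \<chi> \<eta>)
            \<longrightarrow> gauss_sum \<psi> \<chi> * gauss_sum \<psi> \<eta> =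
                jacobi_sum \<chi> \<eta> * gauss_sum \<psi> (char_mult \<chi> \<eta>))"
proof -
  interpret lr M using assms(1,2) by unfold_locales
  have nf: "\<not> ring_is_field TYPE('a) \<Longrightarrow> M \<noteq> {0}" using field_iff by blast
  show ?thesis
  proof (intro conjI impI allI)
    assume "primitive_char M \<eta>" "\<not> trivial_char \<chi> \<and> \<not> primitive_char M \<chi>"
    then show "jacobi_sum \<chi> \<eta> = 0" using part1a[OF assms(3,4)] by blast
  next
    assume "primitive_char M \<eta>" "trivial_char \<chi> \<and> \<not> ring_is_field TYPE('a)"
    then show "jacobi_sum \<chi> \<eta> = 0" using part1b[OF assms(4)] nf by blast
  next
    assume "primitive_char M \<chi> \<and> primitive_char M \<eta> \<and> \<not> ring_is_field TYPE('a) \<and>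
          \<not> trivial_char (char_mult \<chi> \<eta>) \<and> \<not> primitive_char M (char_mult \<chi> \<eta>)"
    then show "jacobi_sum \<chi> \<eta> = 0" using part2[OF assms(3,4)] by blast
  next
    fix \<psi> :: "'a \<Rightarrow> complex"
    assume "add_char \<psi> \<and> primitive_add_char \<psi> \<and> primitive_char M (char_mult \<chi> \<eta>)"
    then show "gauss_sum \<psi> \<chi> * gauss_sum \<psi> \<eta> = jacobi_sum \<chi> \<eta> * gauss_sum \<psi> (char_mult \<chi> \<eta>)"
      using part3[OF assms(3,4)] by blast
  qed
qed

end
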